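(* Let $n\neq 1$ be a real number, $k_n=n-1$, and $k_0,k_1,k_2\in\mathbb{R}$. On the phase space with canonical coordinates $(r,\phi,p_r,p_\phi)$, $r>0$, consider $$H_{na}'=\tfrac12 r^{2n}\Big(p_r^2+\tfrac{p_\phi^2}{r^2}\Big)+\frac{k_0}{r^{2k_n}}+\frac{1}{r^{k_n}}\big(k_1\cos(k_n\phi)+k_2\sin(k_n\phi)\big).$$ Define the real functions $$M_{n1}=r^{2k_n}\big(r^2p_r^2-p_\phi^2\big)+\frac{2k_0}{r^{2k_n}}+\frac{2}{r^{k_n}}\big(k_1\cos(k_n\phi)+k_2\sin(k_n\phi)\big),$$ $$M_{n2}=2r^{2n-1}p_rp_\phi+\frac{2}{r^{k_n}}\big(k_1\sin(k_n\phi)-k_2\cos(k_n\phi)\big),$$ and the complex functions $M_n=M_{n1}+iM_{n2}$ and $N_\phi=\cos(2k_n\phi)+i\sin(2k_n\phi)$. Then the complex function $J_{23}=M_n N_\phi^{*}$ (where ${}^*$ denotes complex conjugation), which is quadratic in the momenta, is a constant of motion of $H_{na}'$: $\{J_{23},H_{na}'\}=0$; equivalently its real and imaginary parts both Poisson commute with $H_{na}'$.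
   Context: The Poisson bracket is the canonical one in $(r,\phi,p_r,p_\phi)$, extended complex-linearly to complex-valued functions. A constant of motion of $H$ is a function $F$ with $\{F,H\}=0$. *)

theory Defs
  imports "HOL-Analysis.Analysis"
begin

type_synonym phase_fun = "real \<Rightarrow> real \<Rightarrow> real \<Rightarrow> real \<Rightarrow> complex"

definition d_r :: "phase_fun \<Rightarrow> phase_fun" where
  "d_r F r ph pr pph = vector_derivative (\<lambda>t. F t ph pr pph) (at r)"
definition d_phi :: "phase_fun \<Rightarrow> phase_fun" where
  "d_phi F r ph pr pph = vector_derivative (\<lambda>t. F r t pr pph) (at ph)"
definition d_pr :: "phase_fun \<Rightarrow> phase_fun" where
  "d_pr F r ph pr pph = vector_derivative (\<lambda>t. F r ph t pph) (at pr)"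
definition d_pphi :: "phase_fun \<Rightarrow> phase_fun" where
  "d_pphi F r ph pr pph = vector_derivative (\<lambda>t. F r ph pr t) (at pph)"

definition poisson :: "phase_fun \<Rightarrow> phase_fun \<Rightarrow> phase_fun" where
  "poisson F G r ph pr pph =
     d_r F r ph pr pph * d_pr G r ph pr pph - d_pr F r ph pr pph * d_r G r ph pr pph
   + d_phi F r ph pr pph * d_pphi G r ph pr pph - d_pphi F r ph pr pph * d_phi G r ph pr pph"

definition H_na :: "real \<Rightarrow> real \<Rightarrow> real \<Rightarrow> real \<Rightarrow> phase_fun" where
  "H_na n k0 k1 k2 r ph pr pph = complex_of_real (
     1/2 * r powr (2*n) * (pr^2 + pph^2 / r^2) + k0 / r powr (2*(n-1))
     + 1 / r powr (n-1) * (k1 * cos ((n-1)*ph) + k2 * sin ((n-1)*ph)))"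

definition M_n1 :: "real \<Rightarrow> real \<Rightarrow> real \<Rightarrow> real \<Rightarrow> real \<Rightarrow> real \<Rightarrow> real \<Rightarrow> real \<Rightarrow> real" where
  "M_n1 n k0 k1 k2 r ph pr pph =
     r powr (2*(n-1)) * (r^2 * pr^2 - pph^2) + 2*k0 / r powr (2*(n-1))
     + 2 / r powr (n-1) * (k1 * cos ((n-1)*ph) + k2 * sin ((n-1)*ph))"

definition M_n2 :: "real \<Rightarrow> real \<Rightarrow> real \<Rightarrow> real \<Rightarrow> real \<Rightarrow> real \<Rightarrow> real \<Rightarrow> real \<Rightarrow> real" where
  "M_n2 n k0 k1 k2 r ph pr pph =
     2 * r powr (2*n - 1) * pr * pph
     + 2 / r powr (n-1) * (k1 * sin ((n-1)*ph) - k2 * cos ((n-1)*ph))"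

definition M_n :: "real \<Rightarrow> real \<Rightarrow> real \<Rightarrow> real \<Rightarrow> phase_fun" where
  "M_n n k0 k1 k2 r ph pr pph =
     Complex (M_n1 n k0 k1 k2 r ph pr pph) (M_n2 n k0 k1 k2 r ph pr pph)"

definition N_phi :: "real \<Rightarrow> phase_fun" where
  "N_phi n r ph pr pph = Complex (cos (2*(n-1)*ph)) (sin (2*(n-1)*ph))"

definition J23 :: "real \<Rightarrow> real \<Rightarrow> real \<Rightarrow> real \<Rightarrow> phase_fun" where
  "J23 n k0 k1 k2 r ph pr pph = M_n n k0 k1 k2 r ph pr pph * cnj (N_phi n r ph pr pph)"

end

theory Submission
  imports Defs
begin
lemma p1: "(r::real)>0 \<Longrightarrow> r powr (2*n) = (r powr (n-1))^2 * r^2"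
proof -
  assume r: "r>0"
  have "r powr (2*n) = r powr ((n-1)+(n-1)+1+1)" by (intro arg_cong[of _ _ "\<lambda>e. r powr e"]) simp
  also have "\<dots> = (r powr (n-1))^2 * r^2" using r by (simp only: powr_add powr_one power2_eq_square)
  finally show ?thesis .
qed
lemma p2: "(r::real)>0 \<Longrightarrow> r powr (2*(n-1)) = (r powr (n-1))^2"
  by (simp add: power2_eq_square powr_add[symmetric] del: powr_diff)
lemma p3: "(r::real)>0 \<Longrightarrow> r powr (2*n-1) = (r powr (n-1))^2 * r"
proof -
  assume r: "r>0"
  have "r powr (2*n-1) = r powr ((n-1)+(n-1)+1)" by (intro arg_cong[of _ _ "\<lambda>e. r powr e"]) simp
  also have "\<dots> = (r powr (n-1))^2 * r" using r by (simp only: powr_add powr_one power2_eq_square)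
  finally show ?thesis .
qed
lemma vd:
  assumes "(f has_real_derivative a) (at x)" "(g has_real_derivative b) (at x)"
  shows "vector_derivative (\<lambda>t. complex_of_real (f t) + \<i> * complex_of_real (g t)) (at x) = of_real a + \<i> * of_real b"
  by (rule vector_derivative_at, rule has_vector_derivative_add[OF has_vector_derivative_of_real[OF assms(1)] has_vector_derivative_mult_right[OF has_vector_derivative_of_real[OF assms(2)]]])
lemma vd1:
  assumes "(f has_real_derivative a) (at x)"
  shows "vector_derivative (\<lambda>t. complex_of_real (f t)) (at x) = of_real a"
  by (rule vector_derivative_at, rule has_vector_derivative_of_real[OF assms(1)])

definition Hr :: "real \<Rightarrow> real \<Rightarrow> real \<Rightarrow> real \<Rightarrow> real \<Rightarrow> real \<Rightarrow> real \<Rightarrow> real \<Rightarrow> real" where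
  "Hr n k0 k1 k2 r ph pr pph =
     1/2 * r powr (2*n) * (pr^2 + pph^2 / r^2) + k0 / r powr (2*(n-1))
     + 1 / r powr (n-1) * (k1 * cos ((n-1)*ph) + k2 * sin ((n-1)*ph))"

lemma Hdef: "H_na n k0 k1 k2 r ph pr pph = of_real (Hr n k0 k1 k2 r ph pr pph)"
  by (simp add: H_na_def Hr_def)

lemma Hdef': "H_na n k0 k1 k2 r ph pr = (\<lambda>t. of_real (Hr n k0 k1 k2 r ph pr t))"
  by (rule ext) (simp add: Hdef)

lemma Jdef: "J23 n k0 k1 k2 r ph pr pph =
  of_real (M_n1 n k0 k1 k2 r ph pr pph * cos (2*(n-1)*ph) + M_n2 n k0 k1 k2 r ph pr pph * sin (2*(n-1)*ph))
  + \<i> * of_real (M_n2 n k0 k1 k2 r ph pr pph * cos (2*(n-1)*ph) - M_n1 n k0 k1 k2 r ph pr pph * sin (2*(n-1)*ph))"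
  by (simp add: J23_def M_n_def N_phi_def complex_eq_iff)


definition Hq :: "real \<Rightarrow> real \<Rightarrow> real \<Rightarrow> real \<Rightarrow> real \<Rightarrow> real \<Rightarrow> real \<Rightarrow> real \<Rightarrow> real \<Rightarrow> real" where
  "Hq a k0 k1 k2 q r ph pr pph = 1/2 * q^2 * (r^2 * pr^2 + pph^2) + k0 / q^2 + (k1 * cos (a * ph) + k2 * sin (a * ph)) / q"
definition M1q :: "real \<Rightarrow> real \<Rightarrow> real \<Rightarrow> real \<Rightarrow> real \<Rightarrow> real \<Rightarrow> real \<Rightarrow> real \<Rightarrow> real \<Rightarrow> real" where
  "M1q a k0 k1 k2 q r ph pr pph = q^2 * (r^2 * pr^2 - pph^2) + 2 * k0 / q^2 + 2 * (k1 * cos (a * ph) + k2 * sin (a * ph)) / q"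
definition M2q :: "real \<Rightarrow> real \<Rightarrow> real \<Rightarrow> real \<Rightarrow> real \<Rightarrow> real \<Rightarrow> real \<Rightarrow> real \<Rightarrow> real \<Rightarrow> real" where
  "M2q a k0 k1 k2 q r ph pr pph = 2 * q^2 * r * pr * pph + 2 * (k1 * sin (a * ph) - k2 * cos (a * ph)) / q"

lemma Hq_eq: assumes r: "r>0" shows "Hr n k0 k1 k2 r ph pr pph = Hq (n-1) k0 k1 k2 (r powr (n-1)) r ph pr pph"
proof -
  obtain q where qd: "q = r powr (n-1)" by simp
  have q: "q > 0" using r qd by simp
  show ?thesis unfolding Hr_def Hq_def unfolding p2[OF r] unfolding p1[OF r] unfolding qd[symmetric] using r q by (simp add: field_simps)
qed
lemma M1q_eq: assumes r: "r>0" shows "M_n1 n k0 k1 k2 r ph pr pph = M1q (n-1) k0 k1 k2 (r powr (n-1)) r ph pr pph"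
proof -
  obtain q where qd: "q = r powr (n-1)" by simp
  have q: "q > 0" using r qd by simp
  show ?thesis unfolding M_n1_def M1q_def p2[OF r] unfolding qd[symmetric] using r q by (simp add: field_simps)
qed
lemma M2q_eq: assumes r: "r>0" shows "M_n2 n k0 k1 k2 r ph pr pph = M2q (n-1) k0 k1 k2 (r powr (n-1)) r ph pr pph"
proof -
  obtain q where qd: "q = r powr (n-1)" by simp
  have q: "q > 0" using r qd by simp
  show ?thesis unfolding M_n2_def M2q_def p3[OF r] unfolding qd[symmetric] using r q by (simp add: field_simps)
qed

lemma ev_pos: "(r::real) > 0 \<Longrightarrow> \<forall>\<^sub>F t in nhds r. t > 0"
  using eventually_nhds_in_open[of "{0<..}" r] by simp

lemma powr_m1: "(t::real) > 0 \<Longrightarrow> t powr (a - 1) = t powr a / t"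
  by (simp add: powr_diff)


lemma Hq_r: assumes "(Q has_real_derivative Q') (at r)" "Q r \<noteq> 0"
  shows "((\<lambda>t. Hq a k0 k1 k2 (Q t) t ph pr pph) has_real_derivative
   Q r * Q' * (r^2 * pr^2 + pph^2) + (Q r)^2 * r * pr^2 - 2 * k0 * Q' / (Q r)^3
   - (k1 * cos (a * ph) + k2 * sin (a * ph)) * Q' / (Q r)^2) (at r)"
  unfolding Hq_def
  apply (rule derivative_eq_intros refl assms | (simp add: assms(2); fail))+
  using assms(2) by (simp add: field_simps power2_eq_square power3_eq_cube)

lemma M1q_r: assumes "(Q has_real_derivative Q') (at r)" "Q r \<noteq> 0"
  shows "((\<lambda>t. M1q a k0 k1 k2 (Q t) t ph pr pph) has_real_derivative
   2 * Q r * Q' * (r^2 * pr^2 - pph^2) + 2 * (Q r)^2 * r * pr^2 - 4 * k0 * Q' / (Q r)^3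
   - 2 * (k1 * cos (a * ph) + k2 * sin (a * ph)) * Q' / (Q r)^2) (at r)"
  unfolding M1q_def
  apply (rule derivative_eq_intros refl assms | (simp add: assms(2); fail))+
  using assms(2) by (simp add: field_simps power2_eq_square power3_eq_cube)

lemma M2q_r: assumes "(Q has_real_derivative Q') (at r)" "Q r \<noteq> 0"
  shows "((\<lambda>t. M2q a k0 k1 k2 (Q t) t ph pr pph) has_real_derivative
   2 * (2 * Q r * Q' * r + (Q r)^2) * pr * pph
   - 2 * (k1 * sin (a * ph) - k2 * cos (a * ph)) * Q' / (Q r)^2) (at r)"
  unfolding M2q_def
  apply (rule derivative_eq_intros refl assms | (simp add: assms(2); fail))+
  using assms(2) by (simp add: field_simps power2_eq_square power3_eq_cube)

lemma Hq_ph: assumes "q \<noteq> 0"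
  shows "((\<lambda>t. Hq a k0 k1 k2 q r t pr pph) has_real_derivative
   - a * (k1 * sin (a * ph) - k2 * cos (a * ph)) / q) (at ph)"
  unfolding Hq_def
  apply (rule derivative_eq_intros refl | (simp add: assms; fail))+
  using assms by (simp add: field_simps)
lemma M1q_ph: assumes "q \<noteq> 0"
  shows "((\<lambda>t. M1q a k0 k1 k2 q r t pr pph) has_real_derivative
   - 2 * a * (k1 * sin (a * ph) - k2 * cos (a * ph)) / q) (at ph)"
  unfolding M1q_def
  apply (rule derivative_eq_intros refl | (simp add: assms; fail))+
  using assms by (simp add: field_simps)
lemma M2q_ph: assumes "q \<noteq> 0"
  shows "((\<lambda>t. M2q a k0 k1 k2 q r t pr pph) has_real_derivative
   2 * a * (k1 * cos (a * ph) + k2 * sin (a * ph)) / q) (at ph)"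
  unfolding M2q_def
  apply (rule derivative_eq_intros refl | (simp add: assms; fail))+
  using assms by (simp add: field_simps)

lemma Hq_pr: "((\<lambda>t. Hq a k0 k1 k2 q r ph t pph) has_real_derivative q^2 * r^2 * pr) (at pr)"
  unfolding Hq_def
  apply (rule derivative_eq_intros refl)+
  by (simp add: field_simps)
lemma M1q_pr: "((\<lambda>t. M1q a k0 k1 k2 q r ph t pph) has_real_derivative 2 * q^2 * r^2 * pr) (at pr)"
  unfolding M1q_def
  apply (rule derivative_eq_intros refl)+
  by (simp add: field_simps)
lemma M2q_pr: "((\<lambda>t. M2q a k0 k1 k2 q r ph t pph) has_real_derivative 2 * q^2 * r * pph) (at pr)"
  unfolding M2q_def
  apply (rule derivative_eq_intros refl)+
  by (simp add: field_simps)
lemma Hq_pph: "((\<lambda>t. Hq a k0 k1 k2 q r ph pr t) has_real_derivative q^2 * pph) (at pph)"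
  unfolding Hq_def
  apply (rule derivative_eq_intros refl)+
  by (simp add: field_simps)
lemma M1q_pph: "((\<lambda>t. M1q a k0 k1 k2 q r ph pr t) has_real_derivative - 2 * q^2 * pph) (at pph)"
  unfolding M1q_def
  apply (rule derivative_eq_intros refl)+
  by (simp add: field_simps)
lemma M2q_pph: "((\<lambda>t. M2q a k0 k1 k2 q r ph pr t) has_real_derivative 2 * q^2 * r * pr) (at pph)"
  unfolding M2q_def
  apply (rule derivative_eq_intros refl)+
  by (simp add: field_simps)

lemma transfer_r: assumes "(r::real)>0" "\<And>t. t>0 \<Longrightarrow> f t = g t" "(g has_real_derivative D) (at r)"
  shows "(f has_real_derivative D) (at r)"
  using assms(3)
  by (rule DERIV_cong_ev[THEN iffD1, rotated -1]) (auto intro: eventually_mono[OF ev_pos[OF assms(1)]] simp: assms(2))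

lemma dQ: assumes "(r::real)>0" shows "((\<lambda>t. t powr a) has_real_derivative a * (r powr a) / r) (at r)"
  using has_real_derivative_powr[OF assms, of a] assms by (simp add: powr_m1)

lemma lin2: "(f has_real_derivative f') (at x) \<Longrightarrow> (g has_real_derivative g') (at x) \<Longrightarrow>
  ((\<lambda>t. f t * c + g t * s) has_real_derivative f' * c + g' * s) (at x)"
  by (auto intro!: derivative_eq_intros)
lemma lin2m: "(g has_real_derivative g') (at x) \<Longrightarrow> (f has_real_derivative f') (at x) \<Longrightarrow>
  ((\<lambda>t. g t * c - f t * s) has_real_derivative g' * c - f' * s) (at x)"
  by (auto intro!: derivative_eq_intros)
lemma ph2: "(f has_real_derivative f') (at x) \<Longrightarrow> (g has_real_derivative g') (at x) \<Longrightarrow>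
  ((\<lambda>t. f t * cos (b * t) + g t * sin (b * t)) has_real_derivative
    f' * cos (b * x) - f x * b * sin (b * x) + g' * sin (b * x) + g x * b * cos (b * x)) (at x)"
  by (auto intro!: derivative_eq_intros simp: algebra_simps)
lemma ph2m: "(g has_real_derivative g') (at x) \<Longrightarrow> (f has_real_derivative f') (at x) \<Longrightarrow>
  ((\<lambda>t. g t * cos (b * t) - f t * sin (b * t)) has_real_derivative
    g' * cos (b * x) - g x * b * sin (b * x) - f' * sin (b * x) - f x * b * cos (b * x)) (at x)"
  by (auto intro!: derivative_eq_intros simp: algebra_simps)

lemma Jdef': "J23 n k0 k1 k2 r ph pr = (\<lambda>t. of_real (M_n1 n k0 k1 k2 r ph pr t * cos (2*(n-1)*ph) + M_n2 n k0 k1 k2 r ph pr t * sin (2*(n-1)*ph))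
  + \<i> * of_real (M_n2 n k0 k1 k2 r ph pr t * cos (2*(n-1)*ph) - M_n1 n k0 k1 k2 r ph pr t * sin (2*(n-1)*ph)))"
  by (rule ext) (simp add: Jdef)

theorem proposition1:
  fixes n k0 k1 k2 :: real
  assumes "n \<noteq> 1"
  shows "\<forall>r ph pr pph. r > 0 \<longrightarrow>
           poisson (J23 n k0 k1 k2) (H_na n k0 k1 k2) r ph pr pph = 0"
proof (intro allI impI)
  fix r ph pr pph :: real
  assume r: "r > 0"
  have qnz: "r powr (n-1) \<noteq> 0" using r by simp
  obtain C where Cd: "C = cos (2 * (n - 1) * ph)" by simp
  obtain S where Sd: "S = sin (2 * (n - 1) * ph)" by simp
  obtain c where cd: "c = cos ((n - 1) * ph)" by simp
  obtain s where sd: "s = sin ((n - 1) * ph)" by simp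
  obtain q where qd: "q = r powr (n - 1)" by simp
  obtain a where ad: "a = n - 1" by simp
  have qpos: "q > 0" using qd r by simp
  note HR = transfer_r[OF r Hq_eq Hq_r[OF dQ[OF r] qnz]]
  note M1R = transfer_r[OF r M1q_eq M1q_r[OF dQ[OF r] qnz]]
  note M2R = transfer_r[OF r M2q_eq M2q_r[OF dQ[OF r] qnz]]
  note M1P = M1q_ph[OF qnz] and M2P = M2q_ph[OF qnz] and HP = Hq_ph[OF qnz]
  have "poisson (J23 n k0 k1 k2) (H_na n k0 k1 k2) r ph pr pph = 0"
    unfolding poisson_def d_r_def d_phi_def d_pr_def d_pphi_def
    apply (simp only: Jdef' Hdef' Jdef Hdef Hq_eq[OF r] M1q_eq[OF r] M2q_eq[OF r])
    apply (simp only: vd1[OF HR] vd1[OF HP] vd1[OF Hq_pr] vd1[OF Hq_pph]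
       vd[OF lin2[OF M1R M2R] lin2m[OF M2R M1R]]
       vd[OF ph2[OF M1P M2P] ph2m[OF M2P M1P]]
       vd[OF lin2[OF M1q_pr M2q_pr] lin2m[OF M2q_pr M1q_pr]]
       vd[OF lin2[OF M1q_pph M2q_pph] lin2m[OF M2q_pph M1q_pph]])
    apply (simp only: Hq_def M1q_def M2q_def)
    apply (simp only: Cd[symmetric] Sd[symmetric])
    apply (simp only: cd[symmetric] sd[symmetric])
    apply (simp only: qd[symmetric])
    apply (simp only: ad[symmetric])
    using qpos r
    apply (simp add: complex_eq_iff)
    apply (simp add: field_simps)
    apply algebra+
    done
  then show "poisson (J23 n k0 k1 k2) (H_na n k0 k1 k2) r ph pr pph = 0" .
qed
end
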